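(* Let $L>0$, $\theta_1>0$, $\theta_2>0$, $0\le \epsilon<1$, $\omega\ge 0$, and let $c(t)=\theta_1(1+\epsilon\cos(\omega t))$. Fix a setpoint $x^*\in(0,L)$ and a constant $v_{\max}$ with $v(x^* )<v_{\max}<1$, where $v(x^* )=\frac{\theta_2x^*}{1+\theta_2x^*}$. Let $S(x^* )\in\mathbb{R}$ satisfy $S(x^* )\ge S_{\min}(x^* )$, where $$S_{\min}(x^* )=\frac{x^*}{\frac{1}{\theta_2x^*}+1}\max\left\{\frac{v_{\max}\left(1+\frac{1}{\theta_2x^*}\right)-1}{x^*};\ \frac{1}{L-x^*}\right\},$$ and let $a_{\rm l}(x^* )>0$ and $a_{\rm r}(x^* )>0$ be solutions of $$a_{\rm l}(x^* )(v_{\max}-v(x^* ))-S(x^* )\big(1-e^{-a_{\rm l}(x^* )x^*}\big)=0,\qquad a_{\rm r}(x^* )v(x^* )-S(x^* )\big(1-e^{-a_{\rm r}(x^* )(L-x^* )}\big)=0.$$ Consider the delay-free system $$\dot x(t)=c(t)\left[-\frac{\theta_2x(t)}{(1+\theta_2x(t))(1-U(t))}+\frac{U(t)}{1-U(t)}\right]$$ in closed loop with the feedback $U(t)=v(x(t),x^* )$ (defined in the context), with initial condition $x(0)=x_0\in[0,L)$. Then the closed-loop system is globally exponentially stable at $x=x^*$ on the physical domain: for every $x_0\in[0,L)$ the solution exists for all $t\ge0$, stays in $[0,L]$, and there exist constants $k,\lambda>0$ (independent of $x_0$) such that $|x(t)-x^*|\le k e^{-\lambda t}|x_0-x^*|$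 for all $t\ge 0$.
   Context: The feedback is the piecewise exponential ("Bang-Bang-like") law $v(x,x^* )=v_{\rm l}(x,x^* )$ for $x\le x^*$ and $v(x,x^* )=v_{\rm r}(x,x^* )$ for $x> x^*$, where $$v_{\rm l}(x,x^* )=v(x^* )+(v_{\max}-v(x^* ))\frac{1-e^{a_{\rm l}(x^* )(x-x^* )}}{1-e^{-a_{\rm l}(x^* )x^*}},\qquad v_{\rm r}(x,x^* )=v(x^* )-v(x^* )\frac{1-e^{-a_{\rm r}(x^* )(x-x^* )}}{1-e^{-a_{\rm r}(x^* )(L-x^* )}},$$ with $v(x^* )=\theta_2x^*/(1+\theta_2x^* )$. Here $x(t)$ is the length of the fully filled zone of a screw extruder, $U$ is the inlet filling ratio, $v_{\max}<1$ is the maximal inlet filling ratio. *)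

theory Defs
  imports "HOL-Analysis.Analysis"
begin

definition vset :: "real \<Rightarrow> real \<Rightarrow> real" where
  "vset \<theta>\<^sub>2 xs = \<theta>\<^sub>2 * xs / (1 + \<theta>\<^sub>2 * xs)"

definition v_l :: "real \<Rightarrow> real \<Rightarrow> real \<Rightarrow> real \<Rightarrow> real \<Rightarrow> real" where
  "v_l \<theta>\<^sub>2 vmax al xs x =
     vset \<theta>\<^sub>2 xs + (vmax - vset \<theta>\<^sub>2 xs) * (1 - exp (al * (x - xs))) / (1 - exp (- al * xs))"

definition v_r :: "real \<Rightarrow> real \<Rightarrow> real \<Rightarrow> real \<Rightarrow> real \<Rightarrow> real" where
  "v_r \<theta>\<^sub>2 L ar xs x =
     vset \<theta>\<^sub>2 xs - vset \<theta>\<^sub>2 xs * (1 - exp (- ar * (x - xs))) / (1 - exp (- ar * (L - xs)))"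

definition feedback :: "real \<Rightarrow> real \<Rightarrow> real \<Rightarrow> real \<Rightarrow> real \<Rightarrow> real \<Rightarrow> real \<Rightarrow> real" where
  "feedback \<theta>\<^sub>2 L vmax al ar xs x =
     (if x \<le> xs then v_l \<theta>\<^sub>2 vmax al xs x else v_r \<theta>\<^sub>2 L ar xs x)"

definition Smin :: "real \<Rightarrow> real \<Rightarrow> real \<Rightarrow> real \<Rightarrow> real" where
  "Smin \<theta>\<^sub>2 L vmax xs =
     xs / (1 / (\<theta>\<^sub>2 * xs) + 1) *
       max ((vmax * (1 + 1 / (\<theta>\<^sub>2 * xs)) - 1) / xs) (1 / (L - xs))"

definition coef :: "real \<Rightarrow> real \<Rightarrow> real \<Rightarrow> real \<Rightarrow> real" where
  "coef \<theta>\<^sub>1 \<epsilon> \<omega> t = \<theta>\<^sub>1 * (1 + \<epsilon> * cos (\<omega> * t))"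

definition plant :: "real \<Rightarrow> real \<Rightarrow> real \<Rightarrow> real \<Rightarrow> real \<Rightarrow> real \<Rightarrow> real \<Rightarrow> real" where
  "plant \<theta>\<^sub>1 \<theta>\<^sub>2 \<epsilon> \<omega> t x U =
     coef \<theta>\<^sub>1 \<epsilon> \<omega> t * (- (\<theta>\<^sub>2 * x) / ((1 + \<theta>\<^sub>2 * x) * (1 - U)) + U / (1 - U))"

definition closed_loop :: "real \<Rightarrow> real \<Rightarrow> real \<Rightarrow> real \<Rightarrow> real \<Rightarrow> real \<Rightarrow> real \<Rightarrow> real \<Rightarrow> real \<Rightarrow> real \<Rightarrow> real \<Rightarrow> real" where
  "closed_loop \<theta>\<^sub>1 \<theta>\<^sub>2 \<epsilon> \<omega> L vmax al ar xs t x =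
     plant \<theta>\<^sub>1 \<theta>\<^sub>2 \<epsilon> \<omega> t x (feedback \<theta>\<^sub>2 L vmax al ar xs x)"

definition is_solution :: "real \<Rightarrow> real \<Rightarrow> real \<Rightarrow> real \<Rightarrow> real \<Rightarrow> real \<Rightarrow> real \<Rightarrow> real \<Rightarrow> real \<Rightarrow> real \<Rightarrow> (real \<Rightarrow> real) \<Rightarrow> bool" where
  "is_solution \<theta>\<^sub>1 \<theta>\<^sub>2 \<epsilon> \<omega> L vmax al ar xs x0 x \<longleftrightarrow>
     x 0 = x0 \<and>
     (\<forall>t\<ge>0. (x has_real_derivative closed_loop \<theta>\<^sub>1 \<theta>\<^sub>2 \<epsilon> \<omega> L vmax al ar xs t (x t)) (at t within {0..}))"

end

theory Submission
  imports Defs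
begin


lemma ode_below:
  fixes f :: "real \<Rightarrow> real" and e p K :: real
  assumes cont: "continuous_on {..<e} f" and pos: "\<And>z. z < e \<Longrightarrow> f z > 0"
    and bnd: "\<And>z. z < e \<Longrightarrow> f z \<le> K * (e - z)" and K: "K > 0" and p: "p < e"
  shows "\<exists>\<psi>. \<psi> 0 = p \<and> (\<forall>s\<ge>0. p \<le> \<psi> s \<and> \<psi> s < e \<and> (\<psi> has_real_derivative f (\<psi> s)) (at s))"
proof -
  define h where "h z = 1 / f z" for z
  have hcont: "continuous_on {..<e} h"
    unfolding h_def using cont by (auto intro!: continuous_intros) (metis less_irrefl pos)
  define b0 where "b0 = p - 2"
  define I where "I y = integral {b0..y} h" for y
  define \<Phi> where "\<Phi> y = I y - I p" for y
  have D1: "(\<Phi> has_real_derivative h y) (at y)" if "b0 < y" "y < e" for y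
  proof -
    define c where "c = (y + e) / 2"
    have "continuous_on {b0..c} h"
      using hcont by (rule continuous_on_subset) (use that in \<open>auto simp: c_def\<close>)
    then have "(I has_real_derivative h y) (at y within {b0..c})"
      unfolding I_def by (rule integral_has_real_derivative) (use that in \<open>auto simp: c_def\<close>)
    moreover have "at y within {b0..c} = at y"
      by (rule at_within_interior) (use that in \<open>auto simp: c_def\<close>)
    ultimately have "(I has_real_derivative h y) (at y)" by simp
    then show ?thesis unfolding \<Phi>_def[abs_def] by (auto intro!: derivative_eq_intros)
  qed
  have hpos: "h y > 0" if "y < e" for y using pos[OF that] by (simp add: h_def)
  have mono: "\<Phi> y1 < \<Phi> y2" if "b0 < y1" "y1 < y2" "y2 < e" for y1 y2
  proof (rule DERIV_pos_imp_increasing[OF that(2)])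
    fix x assume x: "y1 \<le> x" "x \<le> y2"
    have "b0 < x" "x < e" using x that by linarith+
    then show "\<exists>y. (\<Phi> has_real_derivative y) (at x) \<and> y > 0"
      using D1 hpos by blast
  qed
  have mono_le: "\<Phi> y1 \<le> \<Phi> y2 \<longleftrightarrow> y1 \<le> y2" if "b0 < y1" "y1 < e" "b0 < y2" "y2 < e" for y1 y2
    using mono[of y1 y2] mono[of y2 y1] that by (cases y1 y2 rule: linorder_cases) auto
  have isc: "isCont \<Phi> y" if "b0 < y" "y < e" for y using D1[OF that] by (rule DERIV_isCont)
  have contI: "continuous_on {u..w} \<Phi>" if "b0 < u" "w < e" for u w
    by (rule continuous_at_imp_continuous_on) (use isc that in auto)
  have \<Phi>p: "\<Phi> p = 0" by (simp add: \<Phi>_def)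
  have lowb: "\<Phi> y \<ge> (ln (e - p) - ln (e - y)) / K" if "p \<le> y" "y < e" for y
  proof -
    define F where "F y = \<Phi> y + ln (e - y) / K" for y
    have "F p \<le> F y"
    proof (rule DERIV_nonneg_imp_increasing_open[OF that(1)])
      fix z assume z: "p < z" "z < y"
      have "(F has_real_derivative h z + (- 1 / (e - z)) / K) (at z)"
        unfolding F_def[abs_def] using D1[of z] z that p K
        by (auto simp: b0_def intro!: derivative_eq_intros)
      moreover have "h z + (- 1 / (e - z)) / K \<ge> 0"
      proof -
        have "f z \<le> K * (e - z)" "f z > 0" using bnd pos z that by auto
        then have "1 / (K * (e - z)) \<le> h z" unfolding h_def
          by (intro divide_left_mono) auto
        then show ?thesis using z that K by (simp add: field_simps)
      qed
      ultimately show "\<exists>d. (F has_real_derivative d) (at z) \<and> 0 \<le> d" by blast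
    next
      show "continuous_on {p..y} F" unfolding F_def[abs_def]
        using contI[of p y] that p K
        by (auto simp: b0_def intro!: continuous_intros)
    qed
    then show ?thesis using K by (simp add: F_def \<Phi>p field_simps)
  qed
  define a1 where "a1 = \<Phi> (p - 1)"
  have a1neg: "a1 < 0" unfolding a1_def using mono[of "p-1" p] \<Phi>p p by (simp add: b0_def)
  have surj: "\<exists>y. p - 1 < y \<and> y < e \<and> \<Phi> y = s" if as0: "a1 < s" for s
  proof (cases "s \<le> 0")
    case True
    obtain y where y: "p - 1 \<le> y" "y \<le> p" "\<Phi> y = s"
      using IVT'[of \<Phi> "p-1" s p] True as0 contI[of "p-1" p] p \<Phi>p by (auto simp: a1_def b0_def)
    moreover have "y \<noteq> p - 1" using y as0 a1_def by auto
    ultimately show ?thesis using p by (intro exI[of _ y]) auto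
  next
    case False
    define ys where "ys = e - (e - p) * exp (- K * s)"
    have ex1: "exp (- K * s) \<le> 1" using K False by simp
    have "(e - p) * exp (- K * s) \<le> e - p" using ex1 p by (intro mult_left_le) auto
    moreover have "(e - p) * exp (- K * s) > 0" using p by simp
    ultimately have ys: "p \<le> ys" "ys < e" by (auto simp: ys_def)
    have "ln (e - ys) = ln (e - p) - K * s" using p by (simp add: ys_def ln_mult)
    then have "\<Phi> ys \<ge> s" using lowb[OF ys] K by simp
    then obtain y where y: "p \<le> y" "y \<le> ys" "\<Phi> y = s"
      using IVT'[of \<Phi> p s ys] False contI[of p ys] ys \<Phi>p by (auto simp: b0_def)
    then show ?thesis using ys by (intro exI[of _ y]) auto
  qed
  define \<psi> where "\<psi> s = (THE y. p - 1 < y \<and> y < e \<and> \<Phi> y = s)" for s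
  have \<psi>: "p - 1 < \<psi> s \<and> \<psi> s < e \<and> \<Phi> (\<psi> s) = s" if as1: "a1 < s" for s
  proof -
    obtain y where y: "p - 1 < y" "y < e" "\<Phi> y = s" using surj[OF as1] by blast
    have "\<exists>!y. p - 1 < y \<and> y < e \<and> \<Phi> y = s"
    proof (rule ex1I[of _ y])
      fix z assume "p - 1 < z \<and> z < e \<and> \<Phi> z = s"
      then show "z = y" using mono_le[of z y] mono_le[of y z] y by (auto simp: b0_def)
    qed (use y in auto)
    then show ?thesis unfolding \<psi>_def by (rule theI')
  qed
  have \<psi>\<Phi>: "\<psi> (\<Phi> y) = y" if "p - 1 < y" "y < e" for y
  proof -
    have "a1 < \<Phi> y" unfolding a1_def using mono[of "p-1" y] that by (simp add: b0_def)
    from \<psi>[OF this] have "\<Phi> (\<psi> (\<Phi> y)) = \<Phi> y" "p - 1 < \<psi> (\<Phi> y)" "\<psi> (\<Phi> y) < e" by auto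
    then show ?thesis using mono_le[of y "\<psi> (\<Phi> y)"] mono_le[of "\<psi> (\<Phi> y)" y] that
      by (auto simp: b0_def)
  qed
  show ?thesis
  proof (intro exI[of _ \<psi>] conjI allI impI)
    show "\<psi> 0 = p" using \<psi>\<Phi>[of p] \<Phi>p p by simp
  next
    fix s :: real assume s: "0 \<le> s"
    have as: "a1 < s" using a1neg s by simp
    note ps = \<psi>[OF as]
    show "\<psi> s < e" using ps by simp
    show "p \<le> \<psi> s" using ps mono_le[of p "\<psi> s"] \<Phi>p s p by (auto simp: b0_def)
    have ic: "isCont \<psi> s"
    proof -
      define y where "y = \<psi> s"
      define d where "d = min ((y - (p - 1)) / 2) ((e - y) / 2)"
      have d: "d > 0" using ps by (simp add: d_def y_def)
      have "isCont \<psi> (\<Phi> y)"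
      proof (rule isCont_inverse_function[where f=\<Phi> and g=\<psi> and x=y, OF d])
        have zz: "p - 1 < z \<and> z < e" if "\<bar>z - y\<bar> \<le> d" for z
        proof -
          have "\<bar>z - y\<bar> < y - (p - 1)" "\<bar>z - y\<bar> < e - y" using ps d that
            by (auto simp: d_def y_def)
          then show ?thesis by (auto simp: abs_less_iff)
        qed
        show "\<psi> (\<Phi> z) = z" if "\<bar>z - y\<bar> \<le> d" for z using \<psi>\<Phi> zz[OF that] by blast
        show "isCont \<Phi> z" if "\<bar>z - y\<bar> \<le> d" for z using isc zz[OF that] by (simp add: b0_def)
      qed
      then show ?thesis using ps by (simp add: y_def)
    qed
    have "(\<psi> has_real_derivative inverse (h (\<psi> s))) (at s)"
    proof (rule DERIV_inverse_function[where f = \<Phi> and a = a1 and b = "s + 1"])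
      show "(\<Phi> has_real_derivative h (\<psi> s)) (at (\<psi> s))" using D1 ps by (simp add: b0_def)
      show "h (\<psi> s) \<noteq> 0" using hpos ps by force
      show "a1 < s" by (rule as)
      show "s < s + 1" by simp
      show "\<Phi> (\<psi> y) = y" if "a1 < y" "y < s + 1" for y using \<psi>[OF that(1)] by simp
      show "isCont \<psi> s" by (rule ic)
    qed
    then show "(\<psi> has_real_derivative f (\<psi> s)) (at s)" by (simp add: h_def)
  qed
qed



definition Gf :: "real \<Rightarrow> real \<Rightarrow> real \<Rightarrow> real \<Rightarrow> real \<Rightarrow> real \<Rightarrow> real \<Rightarrow> real" where
  "Gf t2 L vmax al ar xs x =
     - (t2 * x) / ((1 + t2 * x) * (1 - feedback t2 L vmax al ar xs x))
     + feedback t2 L vmax al ar xs x / (1 - feedback t2 L vmax al ar xs x)"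

lemma closed_loop_eq:
  "closed_loop t1 t2 eps om L vmax al ar xs t x = coef t1 eps om t * Gf t2 L vmax al ar xs x"
  by (simp add: closed_loop_def plant_def Gf_def)

context
  fixes L t2 xs vmax S al ar :: real
  assumes L: "L > 0" and t2: "t2 > 0"
    and xs: "0 < xs" "xs < L"
    and vm: "vset t2 xs < vmax" "vmax < 1"
    and al: "al > 0" and ar: "ar > 0"
    and eql: "al * (vmax - vset t2 xs) - S * (1 - exp (- al * xs)) = 0"
    and eqr: "ar * vset t2 xs - S * (1 - exp (- ar * (L - xs))) = 0"
begin

abbreviation "vs \<equiv> vset t2 xs"
abbreviation "U \<equiv> feedback t2 L vmax al ar xs"
abbreviation "G \<equiv> Gf t2 L vmax al ar xs"

lemma vs_pos: "0 < vs" "vs < 1"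
proof -
  have d: "0 < 1 + t2 * xs" using t2 xs by (simp add: add_pos_pos)
  show "0 < vs" using d t2 xs by (simp add: vset_def)
  show "vs < 1" using d by (simp add: vset_def divide_less_eq)
qed

lemma el: "0 < 1 - exp (- al * xs)" using al xs by simp
lemma er: "0 < 1 - exp (- ar * (L - xs))" using ar xs by simp

lemma Sl: "S = al * (vmax - vs) / (1 - exp (- al * xs))"
proof -
  have "S * (1 - exp (- al * xs)) = al * (vmax - vs)" using eql by linarith
  moreover have "1 - exp (- al * xs) \<noteq> 0" using el by linarith
  ultimately show ?thesis by (metis nonzero_mult_div_cancel_right)
qed
lemma Sr: "S = ar * vs / (1 - exp (- ar * (L - xs)))"
proof -
  have "S * (1 - exp (- ar * (L - xs))) = ar * vs" using eqr by linarith
  moreover have "1 - exp (- ar * (L - xs)) \<noteq> 0" using er by linarith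
  ultimately show ?thesis by (metis nonzero_mult_div_cancel_right)
qed
lemma Spos: "S > 0"
  unfolding Sl using al vm el by simp

lemma Uleft:
  assumes x: "0 \<le> x" "x \<le> xs"
  shows "U x = v_l t2 vmax al xs x" "vs \<le> U x" "U x \<le> vmax" "U x - vs \<le> S * (xs - x)"
proof -
  show eq: "U x = v_l t2 vmax al xs x" using x by (simp add: feedback_def)
  define den where "den = 1 - exp (- al * xs)"
  define num where "num = 1 - exp (al * (x - xs))"
  have den: "den > 0" using el by (simp add: den_def)
  have num0: "0 \<le> num" using x al by (simp add: num_def mult_nonneg_nonpos)
  have "- al * xs \<le> al * (x - xs)" using x al by (simp add: algebra_simps)
  then have numden: "num \<le> den" by (simp add: num_def den_def)
  have numle: "num \<le> al * (xs - x)"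
    using exp_ge_add_one_self[of "al * (x - xs)"] by (simp add: num_def algebra_simps)
  have Ux: "U x = vs + (vmax - vs) * num / den" by (simp add: eq v_l_def num_def den_def)
  have vv: "vmax - vs > 0" using vm by simp
  show "vs \<le> U x" unfolding Ux using vv num0 den by simp
  have "(vmax - vs) * num / den \<le> (vmax - vs) * den / den"
    using vv numden den by (intro divide_right_mono mult_left_mono) auto
  then show "U x \<le> vmax" unfolding Ux using den by simp
  have "(vmax - vs) * num / den \<le> (vmax - vs) * (al * (xs - x)) / den"
    using vv numle den by (intro divide_right_mono mult_left_mono) auto
  also have "\<dots> = S * (xs - x)" unfolding Sl den_def by simp
  finally show "U x - vs \<le> S * (xs - x)" unfolding Ux by simp
qed

lemma Uright:
  assumes x: "xs \<le> x" "x \<le> L"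
  shows "U x = v_r t2 L ar xs x" "0 \<le> U x" "U x \<le> vs" "vs - U x \<le> S * (x - xs)"
proof -
  show eq: "U x = v_r t2 L ar xs x"
    using x by (cases "x = xs") (auto simp: feedback_def v_l_def v_r_def)
  define den where "den = 1 - exp (- ar * (L - xs))"
  define num where "num = 1 - exp (- ar * (x - xs))"
  have den: "den > 0" using er by (simp add: den_def)
  have num0: "0 \<le> num" using x ar by (simp add: num_def)
  have numden: "num \<le> den" using x ar by (simp add: num_def den_def)
  have numle: "num \<le> ar * (x - xs)"
    using exp_ge_add_one_self[of "- ar * (x - xs)"] by (simp add: num_def algebra_simps)
  have Ux: "U x = vs - vs * num / den" by (simp add: eq v_r_def num_def den_def)
  have vv: "vs > 0" using vs_pos by simp
  show "U x \<le> vs" unfolding Ux using vv num0 den by simp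
  have "vs * num / den \<le> vs * den / den"
    using vv numden den by (intro divide_right_mono mult_left_mono) auto
  then show "0 \<le> U x" unfolding Ux using den by simp
  have "vs * num / den \<le> vs * (ar * (x - xs)) / den"
    using vv numle den by (intro divide_right_mono mult_left_mono) auto
  also have "\<dots> = S * (x - xs)" unfolding Sr den_def by simp
  finally show "vs - U x \<le> S * (x - xs)" unfolding Ux by simp
qed

definition "mm = t2 / (1 + t2 * L)^2"
definition "KK = (S + t2) / (1 - vmax)"

lemma mm_pos: "mm > 0"
proof -
  have "1 + t2 * L > 0" using t2 L by (simp add: add_pos_pos)
  then show ?thesis using t2 by (simp add: mm_def)
qed
lemma KK_pos: "KK > 0" using Spos t2 vm by (simp add: KK_def)

lemma Gform:
  assumes "0 \<le> x" "U x < 1"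
  shows "G x = (U x - t2 * x / (1 + t2 * x)) / (1 - U x)"
proof -
  have "1 + t2 * x > 0" using assms t2 by (simp add: add_pos_nonneg)
  then have a: "1 + t2 * x \<noteq> 0" by simp
  have b: "1 - U x \<noteq> 0" using assms by simp
  show ?thesis unfolding Gf_def using a b by (simp add: divide_simps)
qed

lemma vdiff: assumes "0 \<le> x"
  shows "vs - t2 * x / (1 + t2 * x) = t2 * (xs - x) / ((1 + t2 * xs) * (1 + t2 * x))"
proof -
  have "1 + t2 * x > 0" "1 + t2 * xs > 0" using assms t2 xs by (simp_all add: add_pos_nonneg)
  then show ?thesis by (simp add: vset_def field_simps)
qed

lemma den_bounds: assumes "0 \<le> x" "x \<le> L"
  shows "1 \<le> (1 + t2 * xs) * (1 + t2 * x)" "(1 + t2 * xs) * (1 + t2 * x) \<le> (1 + t2 * L)^2"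
proof -
  have a: "1 \<le> 1 + t2 * xs" "1 \<le> 1 + t2 * x" using assms t2 xs by auto
  then show "1 \<le> (1 + t2 * xs) * (1 + t2 * x)" by (metis mult_mono' one_le_mult_iff zero_le_one order_trans a(1) a(2) mult_1_left)
  have "1 + t2 * xs \<le> 1 + t2 * L" "1 + t2 * x \<le> 1 + t2 * L" using assms t2 xs by auto
  then show "(1 + t2 * xs) * (1 + t2 * x) \<le> (1 + t2 * L)^2"
    using a by (simp add: power2_eq_square mult_mono)
qed


lemma Gleft: assumes x: "0 \<le> x" "x \<le> xs"
  shows "mm * (xs - x) \<le> G x" "G x \<le> KK * (xs - x)"
proof -
  define u where "u = U x"
  define w where "w = t2 * x / (1 + t2 * x)"
  have u: "vs \<le> u" "u \<le> vmax" "u - vs \<le> S * (xs - x)" using Uleft[OF x] by (auto simp: u_def)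
  have u1: "u < 1" using u vm by simp
  have u0: "0 < u" using u vs_pos by simp
  have G: "G x = (u - w) / (1 - u)" using Gform[of x] x u1 by (simp add: u_def w_def)
  have xL: "x \<le> L" using x xs by simp
  have db: "1 \<le> (1 + t2 * xs) * (1 + t2 * x)" "(1 + t2 * xs) * (1 + t2 * x) \<le> (1 + t2 * L)^2"
    using den_bounds[OF x(1) xL] by auto
  have vw: "vs - w = t2 * (xs - x) / ((1 + t2 * xs) * (1 + t2 * x))" using vdiff[OF x(1)] by (simp add: w_def)
  have n0: "0 \<le> t2 * (xs - x)" using t2 x by simp
  have pp: "0 < 1 + t2 * xs" "0 < 1 + t2 * x" using t2 xs x by (auto simp: add_pos_nonneg)
  have "mm * (xs - x) = t2 * (xs - x) / (1 + t2 * L)^2" by (simp add: mm_def)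
  also have "\<dots> \<le> vs - w" unfolding vw
    using db n0 pp by (intro divide_left_mono) (auto intro!: mult_pos_pos)
  finally have lo: "mm * (xs - x) \<le> vs - w" .
  have "vs - w \<le> t2 * (xs - x)" unfolding vw using db n0 by (simp add: divide_le_eq mult_le_cancel_left1 mult_le_cancel_left2)
  then have uw: "u - w \<le> (S + t2) * (xs - x)" using u by (simp add: algebra_simps)
  have uw0: "0 \<le> u - w" using lo mm_pos x u by (smt (verit) mult_nonneg_nonneg)
  have "u - w \<le> (u - w) / (1 - u)"
    using uw0 u1 u0 by (simp add: le_divide_eq mult_left_le)
  then show "mm * (xs - x) \<le> G x" using lo u G by linarith
  have "(u - w) / (1 - u) \<le> (u - w) / (1 - vmax)"
    using uw0 u1 u vm by (intro divide_left_mono) (auto simp: mult_pos_pos)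
  also have "\<dots> \<le> (S + t2) * (xs - x) / (1 - vmax)"
    using uw vm by (intro divide_right_mono) auto
  finally show "G x \<le> KK * (xs - x)" using G by (simp add: KK_def)
qed

lemma Gright: assumes x: "xs \<le> x" "x \<le> L"
  shows "mm * (x - xs) \<le> - G x" "- G x \<le> KK * (x - xs)"
proof -
  define u where "u = U x"
  define w where "w = t2 * x / (1 + t2 * x)"
  have u: "0 \<le> u" "u \<le> vs" "vs - u \<le> S * (x - xs)" using Uright[OF x] by (auto simp: u_def)
  have u1: "u < 1" using u vs_pos by simp
  have x0: "0 \<le> x" using x xs by simp
  have G: "- G x = (w - u) / (1 - u)" using Gform[of x] x0 u1 by (simp add: u_def w_def field_simps)
  have db: "1 \<le> (1 + t2 * xs) * (1 + t2 * x)" "(1 + t2 * xs) * (1 + t2 * x) \<le> (1 + t2 * L)^2"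
    using den_bounds[OF x0 x(2)] by auto
  have vw: "w - vs = t2 * (x - xs) / ((1 + t2 * xs) * (1 + t2 * x))" using vdiff[OF x0]
    by (simp add: w_def) (simp add: algebra_simps minus_divide_left)
  have n0: "0 \<le> t2 * (x - xs)" using t2 x by simp
  have pp: "0 < 1 + t2 * xs" "0 < 1 + t2 * x" using t2 xs x0 by (auto simp: add_pos_nonneg)
  have "mm * (x - xs) = t2 * (x - xs) / (1 + t2 * L)^2" by (simp add: mm_def)
  also have "\<dots> \<le> w - vs" unfolding vw
    using db n0 pp by (intro divide_left_mono) (auto intro!: mult_pos_pos)
  finally have lo: "mm * (x - xs) \<le> w - vs" .
  have "w - vs \<le> t2 * (x - xs)" unfolding vw using db n0 by (simp add: divide_le_eq mult_le_cancel_left1 mult_le_cancel_left2)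
  then have uw: "w - u \<le> (S + t2) * (x - xs)" using u by (simp add: algebra_simps)
  have uw0: "0 \<le> w - u" using lo mm_pos x u by (smt (verit) mult_nonneg_nonneg)
  have "w - u \<le> (w - u) / (1 - u)"
    using uw0 u1 u by (simp add: le_divide_eq mult_left_le)
  then show "mm * (x - xs) \<le> - G x" using lo u G by linarith
  have "(w - u) / (1 - u) \<le> (w - u) / (1 - vmax)"
    using uw0 u1 u vm vs_pos by (intro divide_left_mono) (auto simp: mult_pos_pos)
  also have "\<dots> \<le> (S + t2) * (x - xs) / (1 - vmax)"
    using uw vm by (intro divide_right_mono) auto
  finally show "- G x \<le> KK * (x - xs)" using G by (simp add: KK_def)
qed

lemma Gcont_l: "continuous_on {0..xs} G"
proof -
  define Gl where "Gl x = - (t2 * x) / ((1 + t2 * x) * (1 - v_l t2 vmax al xs x))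
     + v_l t2 vmax al xs x / (1 - v_l t2 vmax al xs x)" for x
  have "continuous_on {0..xs} Gl"
  proof -
    have a: "(1 + t2 * x) \<noteq> 0" "1 - v_l t2 vmax al xs x \<noteq> 0" if "x \<in> {0..xs}" for x
    proof -
      show "(1 + t2 * x) \<noteq> 0" using that t2 by (smt (verit) atLeastAtMost_iff mult_nonneg_nonneg)
      show "1 - v_l t2 vmax al xs x \<noteq> 0" using Uleft[of x] that vm by auto
    qed
    have "(1 - exp (- al * xs)) \<noteq> 0" using el by linarith
    then show ?thesis unfolding Gl_def v_l_def using a unfolding v_l_def
      by (intro continuous_intros) auto
  qed
  moreover have "Gl x = G x" if "x \<in> {0..xs}" for x
    using that by (simp add: Gl_def Gf_def feedback_def)
  ultimately show ?thesis using continuous_on_cong by blast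
qed

lemma Gcont_r: "continuous_on {xs..L} G"
proof -
  define Gr where "Gr x = - (t2 * x) / ((1 + t2 * x) * (1 - v_r t2 L ar xs x))
     + v_r t2 L ar xs x / (1 - v_r t2 L ar xs x)" for x
  have "continuous_on {xs..L} Gr"
  proof -
    have a: "(1 + t2 * x) \<noteq> 0" "1 - v_r t2 L ar xs x \<noteq> 0" if "x \<in> {xs..L}" for x
    proof -
      show "(1 + t2 * x) \<noteq> 0" using that t2 xs by (smt (verit) atLeastAtMost_iff mult_nonneg_nonneg)
      show "1 - v_r t2 L ar xs x \<noteq> 0" using Uright[of x] that vs_pos by auto
    qed
    have "(1 - exp (- ar * (L - xs))) \<noteq> 0" using er by linarith
    then show ?thesis unfolding Gr_def using a unfolding v_r_def
      by (intro continuous_intros) auto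
  qed
  moreover have "Gr x = G x" if "x \<in> {xs..L}" for x
    using that Uright(1)[of x] by (simp add: Gr_def Gf_def)
  ultimately show ?thesis using continuous_on_cong by blast
qed


lemma Gsign: assumes "0 \<le> x" "x \<le> L" shows "(x - xs) * G x \<le> - mm * (x - xs)^2"
proof (cases "x \<le> xs")
  case True
  have "mm * (xs - x) \<le> G x" using Gleft(1)[of x] True assms by auto
  then have "(x - xs) * G x \<le> (x - xs) * (mm * (xs - x))"
    using True by (intro mult_left_mono_neg) auto
  then show ?thesis by (simp add: power2_eq_square algebra_simps)
next
  case False
  have "mm * (x - xs) \<le> - G x" using Gright(1)[of x] False assms by auto
  then have "(x - xs) * (mm * (x - xs)) \<le> (x - xs) * (- G x)"
    using False by (intro mult_left_mono) auto
  then show ?thesis by (simp add: power2_eq_square algebra_simps)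
qed

lemma G0: "G 0 > 0"
  using Gleft(1)[of 0] xs mm_pos by (smt (verit) mult_pos_pos)
lemma GL: "G L < 0"
  using Gright(1)[of L] xs mm_pos by (smt (verit) mult_pos_pos)


context
  fixes t1 eps om :: real
  assumes t1: "t1 > 0" and eps: "0 \<le> eps" "eps < 1" and om: "om \<ge> 0"
begin

definition "Cf t = t1 * t + t1 * eps * (if om = 0 then t else sin (om * t) / om)"

lemma Cf_deriv: "(Cf has_real_derivative coef t1 eps om t) (at t)"
proof (cases "om = 0")
  case True
  then show ?thesis unfolding Cf_def[abs_def] coef_def
    by (auto intro!: derivative_eq_intros simp: algebra_simps)
next
  case False
  then show ?thesis unfolding Cf_def[abs_def] coef_def
    by (auto intro!: derivative_eq_intros simp: algebra_simps)
qed

lemma Cf0: "Cf 0 = 0" by (simp add: Cf_def)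

lemma Cf_nonneg: assumes "t \<ge> 0" shows "Cf t \<ge> 0"
proof (cases "om = 0")
  case True
  then show ?thesis unfolding Cf_def using assms t1 eps by simp
next
  case False
  then have om': "om > 0" using om by simp
  have "\<bar>sin (om * t)\<bar> \<le> om * t" using abs_sin_x_le_abs_x[of "om * t"] om' assms by simp
  then have "- (t * om) \<le> sin (om * t)" by (simp add: abs_le_iff mult.commute)
  then have "- t \<le> sin (om * t) / om" using om' by (simp add: le_divide_eq)
  then have "t1 * eps * (- t) \<le> t1 * eps * (sin (om * t) / om)"
    using t1 eps by (intro mult_left_mono) auto
  moreover have "t1 * t + t1 * eps * (- t) \<ge> 0"
  proof -
    have "eps * (t1 * t) \<le> 1 * (t1 * t)" using t1 eps assms by (intro mult_right_mono) auto
    then show ?thesis by (simp add: algebra_simps)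
  qed
  ultimately show ?thesis unfolding Cf_def using False by simp
qed

definition "c0 = t1 * (1 - eps)"
lemma c0_pos: "c0 > 0" using t1 eps by (simp add: c0_def)
lemma coef_ge: "coef t1 eps om t \<ge> c0"
proof -
  have "- eps \<le> eps * cos (om * t)" using eps
    by (metis cos_ge_minus_one mult_left_mono mult_minus1_right)
  then show ?thesis using t1 unfolding c0_def coef_def by (intro mult_left_mono) auto
qed

lemma existence:
  assumes x0: "0 \<le> x0" "x0 < L"
  shows "\<exists>x. is_solution t1 t2 eps om L vmax al ar xs x0 x"
proof -
  consider "x0 < xs" | "x0 = xs" | "x0 > xs" by linarith
  then show ?thesis
  proof cases
    case 2
    have Gxs: "G xs = 0"
      using Gleft[of xs] xs by (simp)
    show ?thesis unfolding is_solution_def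
      by (intro exI[of _ "\<lambda>t. xs"]) (auto simp: 2 closed_loop_eq Gxs intro!: derivative_eq_intros)
  next
    case 1
    define f where "f z = G (max z 0)" for z
    have "\<exists>\<psi>. \<psi> 0 = x0 \<and> (\<forall>s\<ge>0. x0 \<le> \<psi> s \<and> \<psi> s < xs \<and> (\<psi> has_real_derivative f (\<psi> s)) (at s))"
    proof (rule ode_below)
      show "continuous_on {..<xs} f" unfolding f_def
        by (rule continuous_on_compose2[OF Gcont_l]) (use xs in \<open>auto intro!: continuous_intros\<close>)
      show "0 < f z" if "z < xs" for z
        using Gleft(1)[of "max z 0"] that xs mm_pos unfolding f_def
        by (smt (verit) mult_pos_pos)
      show "f z \<le> KK * (xs - z)" if "z < xs" for z
      proof -
        have "f z \<le> KK * (xs - max z 0)" using Gleft(2)[of "max z 0"] that xs unfolding f_def by auto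
        also have "\<dots> \<le> KK * (xs - z)" using KK_pos by (intro mult_left_mono) auto
        finally show ?thesis .
      qed
    qed (use KK_pos 1 in auto)
    then obtain \<psi> where \<psi>: "\<psi> 0 = x0" "\<And>s. s \<ge> 0 \<Longrightarrow> x0 \<le> \<psi> s \<and> \<psi> s < xs \<and> (\<psi> has_real_derivative f (\<psi> s)) (at s)"
      by blast
    show ?thesis unfolding is_solution_def
    proof (intro exI[of _ "\<lambda>t. \<psi> (Cf t)"] conjI allI impI)
      show "\<psi> (Cf 0) = x0" using \<psi> Cf0 by simp
      fix t :: real assume t: "0 \<le> t"
      have C: "Cf t \<ge> 0" using Cf_nonneg[OF t] .
      note ps = \<psi>(2)[OF C]
      have "((\<lambda>t. \<psi> (Cf t)) has_real_derivative f (\<psi> (Cf t)) * coef t1 eps om t) (at t)"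
        using DERIV_chain2[OF conjunct2[OF conjunct2[OF ps]] Cf_deriv] .
      moreover have "f (\<psi> (Cf t)) = G (\<psi> (Cf t))" using ps x0 by (simp add: f_def)
      ultimately show "((\<lambda>t. \<psi> (Cf t)) has_real_derivative closed_loop t1 t2 eps om L vmax al ar xs t (\<psi> (Cf t))) (at t within {0..})"
        by (auto simp: closed_loop_eq mult.commute intro: has_field_derivative_at_within)
    qed
  next
    case 3
    define f where "f w = - G (min (- w) L)" for w
    have "\<exists>\<psi>. \<psi> 0 = - x0 \<and> (\<forall>s\<ge>0. - x0 \<le> \<psi> s \<and> \<psi> s < - xs \<and> (\<psi> has_real_derivative f (\<psi> s)) (at s))"
    proof (rule ode_below)
      have "continuous_on {..< - xs} (\<lambda>w. G (min (- w) L))"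
        by (rule continuous_on_compose2[OF Gcont_r]) (use xs in \<open>auto intro!: continuous_intros\<close>)
      then show "continuous_on {..< - xs} f" unfolding f_def by (intro continuous_intros)
      show "0 < f z" if "z < - xs" for z
        using Gright(1)[of "min (- z) L"] that xs mm_pos unfolding f_def
        by (smt (verit) mult_pos_pos)
      show "f z \<le> KK * (- xs - z)" if "z < - xs" for z
      proof -
        have "f z \<le> KK * (min (- z) L - xs)" using Gright(2)[of "min (- z) L"] that xs unfolding f_def by auto
        also have "\<dots> \<le> KK * (- xs - z)" using KK_pos by (intro mult_left_mono) auto
        finally show ?thesis .
      qed
    qed (use KK_pos 3 in auto)
    then obtain \<psi> where \<psi>: "\<psi> 0 = - x0" "\<And>s. s \<ge> 0 \<Longrightarrow> - x0 \<le> \<psi> s \<and> \<psi> s < - xs \<and> (\<psi> has_real_derivative f (\<psi> s)) (at s)"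
      by blast
    show ?thesis unfolding is_solution_def
    proof (intro exI[of _ "\<lambda>t. - \<psi> (Cf t)"] conjI allI impI)
      show "- \<psi> (Cf 0) = x0" using \<psi> Cf0 by simp
      fix t :: real assume t: "0 \<le> t"
      have C: "Cf t \<ge> 0" using Cf_nonneg[OF t] .
      note ps = \<psi>(2)[OF C]
      have "((\<lambda>t. \<psi> (Cf t)) has_real_derivative f (\<psi> (Cf t)) * coef t1 eps om t) (at t)"
        using DERIV_chain2[OF conjunct2[OF conjunct2[OF ps]] Cf_deriv] .
      then have "((\<lambda>t. - \<psi> (Cf t)) has_real_derivative - (f (\<psi> (Cf t)) * coef t1 eps om t)) (at t)"
        by (rule DERIV_minus)
      moreover have "f (\<psi> (Cf t)) = - G (- \<psi> (Cf t))" using ps x0 by (simp add: f_def)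
      ultimately show "((\<lambda>t. - \<psi> (Cf t)) has_real_derivative closed_loop t1 t2 eps om L vmax al ar xs t (- \<psi> (Cf t))) (at t within {0..})"
        by (auto simp: closed_loop_eq mult.commute intro: has_field_derivative_at_within)
    qed
  qed
qed



definition "lam = c0 * mm"
lemma lam_pos: "lam > 0" using c0_pos mm_pos by (simp add: lam_def)

lemma invariance:
  assumes x0: "0 \<le> x0" "x0 < L"
    and sol: "is_solution t1 t2 eps om L vmax al ar xs x0 x"
  shows "\<forall>t\<ge>0. 0 \<le> x t \<and> x t \<le> L"
proof (rule ccontr)
  define D where "D t = coef t1 eps om t * G (x t)" for t
  have hd: "(x has_real_derivative D t) (at t within {0..})" if "t \<ge> 0" for t
    using sol that by (simp add: is_solution_def D_def closed_loop_eq)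
  have xz: "x 0 = x0" using sol by (simp add: is_solution_def)
  have cx: "continuous (at t within {0..}) x" if "t \<ge> 0" for t using hd[OF that] by (rule DERIV_continuous)
  assume "\<not> (\<forall>t\<ge>0. 0 \<le> x t \<and> x t \<le> L)"
  define B where "B = {t. 0 \<le> t \<and> \<not> (0 \<le> x t \<and> x t \<le> L)}"
  have Bne: "B \<noteq> {}" using \<open>\<not> _\<close> by (auto simp: B_def)
  have bdd: "bdd_below B" by (auto simp: B_def bdd_below_def)
  define t0 where "t0 = Inf B"
  have t0: "t0 \<ge> 0" unfolding t0_def by (rule cInf_greatest[OF Bne]) (auto simp: B_def)
  have lowB: "t0 \<le> b" if "b \<in> B" for b unfolding t0_def using cInf_lower[OF that bdd] .
  have good: "0 \<le> x s \<and> x s \<le> L" if "0 \<le> s" "s < t0" for s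
    using lowB[of s] that by (auto simp: B_def)
  have xt0: "0 \<le> x t0 \<and> x t0 \<le> L"
  proof (rule ccontr)
    assume nt: "\<not> (0 \<le> x t0 \<and> x t0 \<le> L)"
    define \<epsilon> where "\<epsilon> = (if x t0 < 0 then - x t0 else x t0 - L)"
    have ep: "\<epsilon> > 0" using nt by (auto simp: \<epsilon>_def)
    obtain d where d: "d > 0" "\<And>s. s \<in> {0..} \<Longrightarrow> dist s t0 < d \<Longrightarrow> dist (x s) (x t0) < \<epsilon>"
      using cx[OF t0] ep unfolding continuous_within_eps_delta by blast
    define s where "s = max 0 (t0 - d / 2)"
    have s: "s \<ge> 0" "dist s t0 < d" using d t0 by (auto simp: s_def dist_real_def)
    have "dist (x s) (x t0) < \<epsilon>" using d(2)[of s] s by auto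
    then have bad: "\<not> (0 \<le> x s \<and> x s \<le> L)" using nt by (auto simp: \<epsilon>_def dist_real_def split: if_splits)
    have "s < t0 \<or> s = 0 \<and> t0 = 0" using d t0 by (auto simp: s_def)
    then show False using good[of s] bad s xz x0 by auto
  qed
  have lo: "\<exists>d>0. \<forall>h. 0 < h \<and> h < d \<longrightarrow> 0 \<le> x (t0 + h)"
  proof (cases "x t0 = 0")
    case True
    have "D t0 > 0" unfolding D_def True using coef_ge[of t0] c0_pos G0
      by (intro mult_pos_pos) auto
    from has_real_derivative_pos_inc_right[OF hd[OF t0] this]
    obtain d where "d > 0" "\<And>h. h > 0 \<Longrightarrow> t0 + h \<in> {0..} \<Longrightarrow> h < d \<Longrightarrow> x t0 < x (t0 + h)" by blast
    then show ?thesis using True t0 by (intro exI[of _ d]) (auto intro: less_imp_le)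
  next
    case False
    then have pos: "x t0 > 0" using xt0 by simp
    obtain d where d: "d > 0" "\<And>s. s \<in> {0..} \<Longrightarrow> dist s t0 < d \<Longrightarrow> dist (x s) (x t0) < x t0"
      using cx[OF t0] pos unfolding continuous_within_eps_delta by blast
    show ?thesis
    proof (intro exI[of _ d] conjI allI impI)
      fix h assume h: "0 < h \<and> h < d"
      then have "dist (x (t0 + h)) (x t0) < x t0" using d(2)[of "t0 + h"] t0 by (auto simp: dist_real_def)
      then show "0 \<le> x (t0 + h)" by (auto simp: dist_real_def)
    qed (use d in auto)
  qed
  have hi: "\<exists>d>0. \<forall>h. 0 < h \<and> h < d \<longrightarrow> x (t0 + h) \<le> L"
  proof (cases "x t0 = L")
    case True
    have "D t0 < 0" unfolding D_def True using coef_ge[of t0] c0_pos GL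
      by (intro mult_pos_neg) auto
    from has_real_derivative_neg_dec_right[OF hd[OF t0] this]
    obtain d where "d > 0" "\<And>h. h > 0 \<Longrightarrow> t0 + h \<in> {0..} \<Longrightarrow> h < d \<Longrightarrow> x t0 > x (t0 + h)" by blast
    then show ?thesis using True t0 by (intro exI[of _ d]) (auto intro: less_imp_le)
  next
    case False
    then have pos: "L - x t0 > 0" using xt0 by simp
    obtain d where d: "d > 0" "\<And>s. s \<in> {0..} \<Longrightarrow> dist s t0 < d \<Longrightarrow> dist (x s) (x t0) < L - x t0"
      using cx[OF t0] pos unfolding continuous_within_eps_delta by blast
    show ?thesis
    proof (intro exI[of _ d] conjI allI impI)
      fix h assume h: "0 < h \<and> h < d"
      then have "dist (x (t0 + h)) (x t0) < L - x t0" using d(2)[of "t0 + h"] t0 by (auto simp: dist_real_def)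
      then show "x (t0 + h) \<le> L" by (auto simp: dist_real_def)
    qed (use d in auto)
  qed
  obtain d1 where d1: "d1 > 0" "\<And>h. 0 < h \<and> h < d1 \<Longrightarrow> 0 \<le> x (t0 + h)" using lo by blast
  obtain d2 where d2: "d2 > 0" "\<And>h. 0 < h \<and> h < d2 \<Longrightarrow> x (t0 + h) \<le> L" using hi by blast
  have "t0 + min d1 d2 \<le> t0"
    unfolding t0_def[symmetric, THEN sym] t0_def
  proof (rule cInf_greatest[OF Bne])
    fix b assume b: "b \<in> B"
    have "t0 \<le> b" using lowB[OF b] .
    moreover have "b \<noteq> t0" using b xt0 by (auto simp: B_def)
    moreover have "\<not> (0 \<le> x b \<and> x b \<le> L)" using b by (auto simp: B_def)
    ultimately show "Inf B + min d1 d2 \<le> b" unfolding t0_def[symmetric]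
      using d1(2)[of "b - t0"] d2(2)[of "b - t0"] by force
  qed
  then show False using d1 d2 by simp
qed


lemma decay:
  assumes x0: "0 \<le> x0" "x0 < L"
    and sol: "is_solution t1 t2 eps om L vmax al ar xs x0 x"
    and t: "t \<ge> 0"
  shows "x t \<in> {0..L} \<and> \<bar>x t - xs\<bar> \<le> 1 * exp (- lam * t) * \<bar>x0 - xs\<bar>"
proof -
  define D where "D t = coef t1 eps om t * G (x t)" for t
  have hd: "(x has_real_derivative D t) (at t within {0..})" if "t \<ge> 0" for t
    using sol that by (simp add: is_solution_def D_def closed_loop_eq)
  have xz: "x 0 = x0" using sol by (simp add: is_solution_def)
  have cx: "continuous (at t within {0..}) x" if "t \<ge> 0" for t using hd[OF that] by (rule DERIV_continuous)
  have inv: "0 \<le> x s \<and> x s \<le> L" if "s \<ge> 0" for s using invariance[OF x0 sol] that by blast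
  define W where "W s = (x s - xs)^2 * exp (2 * lam * s)" for s
  have W: "W t \<le> W 0"
  proof (cases "t = 0")
    case False
    then have tp: "0 < t" using t by simp
    have cxo: "continuous_on {0..} x" using cx by (simp add: continuous_on_eq_continuous_within)
    have "continuous_on {0..t} x" by (rule continuous_on_subset[OF cxo]) auto
    then have cW: "continuous_on {0..t} W" unfolding W_def[abs_def] by (intro continuous_intros)
    show ?thesis
    proof (rule DERIV_nonpos_imp_decreasing_open[OF less_imp_le[OF tp] _ cW])
      fix s assume s: "0 < s" "s < t"
      have "at s within {0..} = at s" by (rule at_within_interior) (use s in auto)
      then have xd: "(x has_real_derivative D s) (at s)" using hd[of s] s by simp
      have "(W has_real_derivative (2 * (x s - xs) * D s * exp (2 * lam * s)
               + (x s - xs)^2 * (exp (2 * lam * s) * (2 * lam)))) (at s)"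
        unfolding W_def[abs_def] using xd
        by (auto intro!: derivative_eq_intros simp: power2_eq_square algebra_simps)
      moreover have "2 * (x s - xs) * D s * exp (2 * lam * s)
               + (x s - xs)^2 * (exp (2 * lam * s) * (2 * lam)) \<le> 0"
      proof -
        have sg: "(x s - xs) * G (x s) \<le> - mm * (x s - xs)^2" using Gsign inv[of s] s by auto
        have nn: "- mm * (x s - xs)^2 \<le> 0" using mm_pos by simp
        have "(x s - xs) * D s = coef t1 eps om s * ((x s - xs) * G (x s))" by (simp add: D_def)
        also have "\<dots> \<le> coef t1 eps om s * (- mm * (x s - xs)^2)"
          using sg coef_ge[of s] c0_pos by (intro mult_left_mono) auto
        also have "\<dots> \<le> c0 * (- mm * (x s - xs)^2)"
          using coef_ge[of s] nn by (intro mult_right_mono_neg) auto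
        finally have "(x s - xs) * D s \<le> - (lam * (x s - xs)^2)" by (simp add: lam_def)
        then have le0: "2 * ((x s - xs) * D s + lam * (x s - xs)^2) \<le> 0" by (smt (verit))
        have eqq: "2 * (x s - xs) * D s + (x s - xs)^2 * (2 * lam) = 2 * ((x s - xs) * D s + lam * (x s - xs)^2)"
          by (simp add: algebra_simps)
        have "2 * (x s - xs) * D s + (x s - xs)^2 * (2 * lam) \<le> 0" unfolding eqq by (rule le0)
        then have "exp (2 * lam * s) * (2 * (x s - xs) * D s + (x s - xs)^2 * (2 * lam)) \<le> 0"
          by (simp add: mult_nonneg_nonpos)
        then show ?thesis by (simp add: algebra_simps)
      qed
      ultimately show "\<exists>y. (W has_real_derivative y) (at s) \<and> y \<le> 0" by blast
    qed
  qed (simp)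
  have "(x t - xs)^2 = W t * exp (- 2 * lam * t)"
    by (simp add: W_def mult.assoc exp_add[symmetric])
  also have "\<dots> \<le> W 0 * exp (- 2 * lam * t)" using W by (intro mult_right_mono) auto
  also have "\<dots> = (exp (- lam * t) * \<bar>x0 - xs\<bar>)^2"
  proof -
    have e2: "exp (- 2 * lam * t) = exp (- lam * t) * exp (- lam * t)" by (simp add: exp_add[symmetric])
    show ?thesis unfolding e2 by (simp add: W_def xz power2_eq_square abs_mult_self_eq mult_ac)
  qed
  finally have "\<bar>x t - xs\<bar>^2 \<le> (exp (- lam * t) * \<bar>x0 - xs\<bar>)^2" by simp
  then have "\<bar>x t - xs\<bar> \<le> exp (- lam * t) * \<bar>x0 - xs\<bar>"
    by (rule power2_le_imp_le) simp
  then show ?thesis using inv[OF t] by simp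
qed

lemma main:
  "\<exists>k>0. \<exists>lam>0. \<forall>x0\<in>{0..<L}.
           (\<exists>x. is_solution t1 t2 eps om L vmax al ar xs x0 x) \<and>
           (\<forall>x. is_solution t1 t2 eps om L vmax al ar xs x0 x \<longrightarrow>
              (\<forall>t\<ge>0. x t \<in> {0..L} \<and> \<bar>x t - xs\<bar> \<le> k * exp (- lam * t) * \<bar>x0 - xs\<bar>))"
proof -
  have "\<forall>x0\<in>{0..<L}.
           (\<exists>x. is_solution t1 t2 eps om L vmax al ar xs x0 x) \<and>
           (\<forall>x. is_solution t1 t2 eps om L vmax al ar xs x0 x \<longrightarrow>
              (\<forall>t\<ge>0. x t \<in> {0..L} \<and> \<bar>x t - xs\<bar> \<le> 1 * exp (- lam * t) * \<bar>x0 - xs\<bar>))"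
    using existence decay by auto
  then show ?thesis using lam_pos zero_less_one by blast
qed

end
end

theorem theorem1:
  fixes L \<theta>\<^sub>1 \<theta>\<^sub>2 \<epsilon> \<omega> xs vmax S al ar :: real
  assumes "L > 0" and "\<theta>\<^sub>1 > 0" and "\<theta>\<^sub>2 > 0" and "0 \<le> \<epsilon>" and "\<epsilon> < 1" and "\<omega> \<ge> 0"
    and "0 < xs" and "xs < L"
    and "vset \<theta>\<^sub>2 xs < vmax" and "vmax < 1"
    and "S \<ge> Smin \<theta>\<^sub>2 L vmax xs"
    and "al > 0" and "ar > 0"
    and "al * (vmax - vset \<theta>\<^sub>2 xs) - S * (1 - exp (- al * xs)) = 0"
    and "ar * vset \<theta>\<^sub>2 xs - S * (1 - exp (- ar * (L - xs))) = 0"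
  shows "\<exists>k>0. \<exists>lam>0. \<forall>x0\<in>{0..<L}.
           (\<exists>x. is_solution \<theta>\<^sub>1 \<theta>\<^sub>2 \<epsilon> \<omega> L vmax al ar xs x0 x) \<and>
           (\<forall>x. is_solution \<theta>\<^sub>1 \<theta>\<^sub>2 \<epsilon> \<omega> L vmax al ar xs x0 x \<longrightarrow>
              (\<forall>t\<ge>0. x t \<in> {0..L} \<and> \<bar>x t - xs\<bar> \<le> k * exp (- lam * t) * \<bar>x0 - xs\<bar>))"
    by (rule main[OF assms(1,3,7,8,9,10,12,13,14,15,2,4,5,6)])

end
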